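(* Let $H$ be a subgroup of Thompson's group $F$. Assume that for every pair of finite binary words $u$ and $v$, each of which contains both digits $0$ and $1$, there is an element $h\in H$ with the pair of branches $u\rightarrow v$. Then $\mathrm{Cl}(H)$ contains the derived subgroup $[F,F]$.
   Context: Thompson's group $F$ is the group of all piecewise linear homeomorphisms of $[0,1]$ with finitely many breakpoints, all breakpoints dyadic fractions and all slopes integer powers of $2$. For a finite binary word $u$, let $[u]$ denote the dyadic interval $[.u,\,.u111\ldots]$ (numbers whose binary expansion begins with $u$). An element $h\in F$ has the pair of branches $u\rightarrow v$ if $h$ maps $[u]$ linearly onto $[v]$, i.e. $h(.u\alpha)=.v\alpha$ for every infinite binary word $\alpha$. For $H\le F$, the closure $\mathrm{Cl}(H)$ is the subgroup of $F$ consisting of all piecewise-$H$ functions: those $f\in F$ for which there is a finite subdivision of $[0,1]$ into intervals such that on each interval $f$ coincides with some element of $H$. *)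

theory Defs
  imports "HOL-Analysis.Analysis" "HOL-Algebra.Generated_Groups"
begin

definition dyadic :: "real \<Rightarrow> bool" where
  "dyadic x \<longleftrightarrow> (\<exists>(k::int) (n::nat). x = of_int k / 2 ^ n)"

definition subdivision01 :: "real list \<Rightarrow> bool" where
  "subdivision01 xs \<longleftrightarrow> length xs \<ge> 2 \<and> sorted_wrt (<) xs \<and> hd xs = 0 \<and> last xs = 1"

definition thompsonF_set :: "(real \<Rightarrow> real) set" where
  "thompsonF_set = {f. (\<forall>x. x \<notin> {0..1} \<longrightarrow> f x = x)
      \<and> (\<exists>g. homeomorphism {0..1} {0..1} f g)
      \<and> (\<exists>xs. subdivision01 xs \<and> (\<forall>x\<in>set xs. dyadic x)
           \<and> (\<forall>i < length xs - 1. \<exists>(k::int) (b::real).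
                 \<forall>x\<in>{xs!i .. xs!(i+1)}. f x = 2 powi k * x + b))}"

definition thompsonF :: "(real \<Rightarrow> real) monoid" where
  "thompsonF = \<lparr>carrier = thompsonF_set, mult = (\<lambda>f g. f \<circ> g), one = id\<rparr>"

text \<open>Finite binary words are bool lists (True = digit 1, False = digit 0).\<close>
definition word_val :: "bool list \<Rightarrow> real" where
  "word_val u = (\<Sum>i<length u. (if u!i then 1 else 0) / 2 ^ (Suc i))"

definition inf_val :: "(nat \<Rightarrow> bool) \<Rightarrow> real" where
  "inf_val \<alpha> = (\<Sum>i. (if \<alpha> i then 1 else 0) / 2 ^ (Suc i))"

definition has_branches :: "(real \<Rightarrow> real) \<Rightarrow> bool list \<Rightarrow> bool list \<Rightarrow> bool" where
  "has_branches h u v \<longleftrightarrow> (\<forall>\<alpha>.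
      h (word_val u + inf_val \<alpha> / 2 ^ length u) = word_val v + inf_val \<alpha> / 2 ^ length v)"

definition thompson_closure :: "(real \<Rightarrow> real) set \<Rightarrow> (real \<Rightarrow> real) set" where
  "thompson_closure H = {f \<in> thompsonF_set. \<exists>xs. subdivision01 xs \<and>
      (\<forall>i < length xs - 1. \<exists>g\<in>H. \<forall>x\<in>{xs!i .. xs!(i+1)}. f x = g x)}"

end

theory Submission
  imports Defs
begin
definition lvl :: "nat \<Rightarrow> real \<Rightarrow> bool" where
  "lvl V x \<longleftrightarrow> (\<exists>m::int. x = of_int m / 2^V)"

lemma pow2_split: "int a - int b = k \<Longrightarrow> (2::real) powi k = 2^a / 2^b"
  using power_int_diff[of "2::real" "int a" "int b"] by auto

lemma dyadic_lvl: "dyadic x \<longleftrightarrow> (\<exists>V. lvl V x)"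
  unfolding dyadic_def lvl_def by blast

lemma lvl_mono: assumes "lvl V x" "V \<le> W" shows "lvl W x"
proof -
  obtain m where x: "x = of_int m / 2^V" using assms by (auto simp: lvl_def)
  have p: "(2::real)^W = 2^V * 2^(W-V)" using assms(2) by (simp add: power_add[symmetric])
  have "x = of_int (m * 2^(W-V)) / 2^W" unfolding x p by simp
  then show ?thesis unfolding lvl_def by blast
qed

lemma lvl_add: "lvl V x \<Longrightarrow> lvl V y \<Longrightarrow> lvl V (x + y)"
  unfolding lvl_def by (metis add_divide_distrib of_int_add)

lemma lvl_diff: "lvl V x \<Longrightarrow> lvl V y \<Longrightarrow> lvl V (x - y)"
  unfolding lvl_def by (metis diff_divide_distrib of_int_diff)

lemma lvl_int: "lvl V (of_int m)"
  unfolding lvl_def by (rule exI[of _ "m * 2^V"]) simp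

lemma lvl_nat_div: "lvl V (of_nat j / 2^V)"
  unfolding lvl_def by (rule exI[of _ "int j"]) simp

lemma dyadic_add: "dyadic x \<Longrightarrow> dyadic y \<Longrightarrow> dyadic (x + y)"
  unfolding dyadic_lvl by (meson lvl_add lvl_mono max.cobounded1 max.cobounded2)

lemma dyadic_diff: "dyadic x \<Longrightarrow> dyadic y \<Longrightarrow> dyadic (x - y)"
  unfolding dyadic_lvl by (meson lvl_diff lvl_mono max.cobounded1 max.cobounded2)

lemma dyadic_pow: assumes "dyadic x" shows "dyadic (2 powi k * x)"
proof -
  obtain V m where x: "x = of_int m / 2^V" using assms by (auto simp: dyadic_def)
  obtain a b where ab: "int a - int b = k" by (metis int_diff_cases)
  have "2 powi k * x = of_int (m * 2^a) / 2^(V+b)"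
    unfolding pow2_split[OF ab] x by (simp add: power_add mult_ac)
  then show ?thesis unfolding dyadic_def by blast
qed

lemma dyadic_0: "dyadic 0" by (auto simp: dyadic_def)

lemma sub_bounds:
  assumes "subdivision01 xs" "i < length xs"
  shows "0 \<le> xs!i \<and> xs!i \<le> 1"
proof -
  have s: "sorted_wrt (<) xs" and h: "hd xs = 0" "last xs = 1" and l: "length xs \<ge> 2"
    using assms by (auto simp: subdivision01_def)
  have x0: "xs!0 = 0" using h l by (metis hd_conv_nth list.size(3) not_numeral_le_zero)
  have xl: "xs!(length xs - 1) = 1" using h l by (metis last_conv_nth list.size(3) not_numeral_le_zero)
  have "xs!0 \<le> xs!i" using s assms(2) by (metis le_less not_gr_zero sorted_wrt_nth_less)
  moreover have "xs!i \<le> xs!(length xs - 1)" using s assms(2)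
    by (metis Suc_pred' diff_less le_less less_Suc_eq less_nat_zero_code sorted_wrt_nth_less zero_less_one gr0I)
  ultimately show ?thesis using x0 xl by simp
qed

lemma sub_ends:
  assumes "subdivision01 xs"
  shows "xs!0 = 0" "xs!(length xs - 1) = 1" "length xs \<ge> 2"
proof -
  have ne: "xs \<noteq> []" and h: "hd xs = 0" "last xs = 1" and l: "length xs \<ge> 2"
    using assms by (auto simp: subdivision01_def)
  show "xs!0 = 0" using h ne by (simp add: hd_conv_nth)
  show "xs!(length xs - 1) = 1" using h ne by (simp add: last_conv_nth)
  show "length xs \<ge> 2" by (rule l)
qed

lemma sub_less:
  assumes "subdivision01 xs" "i < j" "j < length xs"
  shows "xs!i < xs!j"
  using assms by (auto simp: subdivision01_def sorted_wrt_nth_less)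

lemma F_mono:
  assumes "f \<in> thompsonF_set"
  shows "strict_mono_on {0..1} f" "f 0 = 0" "f 1 = 1" "f ` {0..1} = {0..1}"
    "continuous_on {0..1} f" "inj_on f {0..1}"
proof -
  obtain g where hom: "homeomorphism {0..1} {0..1} f g"
    using assms by (auto simp: thompsonF_set_def)
  obtain xs where sub: "subdivision01 xs" and pcs: "\<forall>i < length xs - 1. \<exists>(k::int) (b::real).
                 \<forall>x\<in>{xs!i .. xs!(i+1)}. f x = 2 powi k * x + b"
    using assms by (auto simp: thompsonF_set_def)
  show cont: "continuous_on {0..1} f" and im: "f ` {0..1} = {0..1}"
    using hom by (auto simp: homeomorphism_def)
  show inj: "inj_on f {0..1}" using hom unfolding homeomorphism_def by (metis inj_on_inverseI)
  have "strict_mono_on {0..1} f \<or> strict_antimono_on {0..1} f"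
    using injective_eq_monotone_map[of "{0..1}" f] cont inj by auto
  moreover have "f (xs!0) < f (xs!1)"
  proof -
    have l: "length xs \<ge> 2" using sub by (simp add: subdivision01_def)
    obtain k b where kb: "\<forall>x\<in>{xs!0 .. xs!(0+1)}. f x = 2 powi k * x + b"
      using pcs l by force
    have lt: "xs!0 < xs!1" using sub_less[OF sub, of 0 1] l by simp
    have "f (xs!0) = 2 powi k * xs!0 + b" "f (xs!1) = 2 powi k * xs!1 + b" using kb lt by auto
    then show ?thesis using lt by simp
  qed
  moreover have "xs!0 \<in> {0..1}" "xs!1 \<in> {0..1}" "xs!0 < xs!1"
    using sub_bounds[OF sub, of 0] sub_bounds[OF sub, of 1] sub_less[OF sub, of 0 1] sub_ends[OF sub] by auto
  ultimately show mono: "strict_mono_on {0..1} f"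
    by (metis monotone_onD order_less_asym)
  have "0 \<in> f ` {0..1}" using im by auto
  then obtain x0 where x0: "x0 \<in> {0..1}" "f x0 = 0" by auto
  have "f 0 \<in> {0..1}" using im by auto
  then show "f 0 = 0" using x0 mono
    by (metis atLeastAtMost_iff order.order_iff_strict linorder_not_le monotone_onD order_refl zero_le_one)
  have "1 \<in> f ` {0..1}" using im by auto
  then obtain x1 where x1: "x1 \<in> {0..1}" "f x1 = 1" by auto
  have "f 1 \<in> {0..1}" using im by auto
  then show "f 1 = 1" using x1 mono
    by (metis atLeastAtMost_iff order.order_iff_strict linorder_not_le monotone_onD order_refl zero_le_one)
qed

lemma F_pieces:
  assumes "f \<in> thompsonF_set"
  shows "\<exists>xs. subdivision01 xs \<and> (\<forall>x\<in>set xs. dyadic x) \<and> (\<forall>i<length xs. dyadic (f (xs!i)))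
     \<and> (\<forall>i < length xs - 1. \<exists>(k::int) (b::real). dyadic b \<and>
                 (\<forall>x\<in>{xs!i .. xs!(i+1)}. f x = 2 powi k * x + b))"
proof -
  obtain xs where sub: "subdivision01 xs" and dy: "\<forall>x\<in>set xs. dyadic x" and
    pcs: "\<forall>i < length xs - 1. \<exists>(k::int) (b::real).
                 \<forall>x\<in>{xs!i .. xs!(i+1)}. f x = 2 powi k * x + b"
    using assms by (auto simp: thompsonF_set_def)
  have dyn: "dyadic (xs!i)" if "i < length xs" for i using dy that by auto
  have vals: "\<forall>i<length xs. dyadic (f (xs!i))"
  proof
    fix i show "i < length xs \<longrightarrow> dyadic (f (xs!i))"
    proof (induction i)
      case 0
      then show ?case using sub_ends[OF sub] F_mono(2)[OF assms] dyadic_0 by simp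
    next
      case (Suc i)
      show ?case
      proof
        assume l: "Suc i < length xs"
        obtain k b where kb: "\<forall>x\<in>{xs!i .. xs!(i+1)}. f x = 2 powi k * x + b"
          using pcs l by force
        have lt: "xs!i < xs!(i+1)" using sub_less[OF sub, of i "i+1"] l by simp
        have "f (xs!(i+1)) = f (xs!i) + 2 powi k * (xs!(i+1) - xs!i)"
          using kb lt by (simp add: algebra_simps)
        then show "dyadic (f (xs!Suc i))"
          using Suc l dyn[of i] dyn[of "Suc i"] by (simp add: dyadic_add dyadic_pow dyadic_diff)
      qed
    qed
  qed
  have "\<forall>i < length xs - 1. \<exists>(k::int) (b::real). dyadic b \<and>
                 (\<forall>x\<in>{xs!i .. xs!(i+1)}. f x = 2 powi k * x + b)"
  proof (intro allI impI)
    fix i assume l: "i < length xs - 1"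
    obtain k b where kb: "\<forall>x\<in>{xs!i .. xs!(i+1)}. f x = 2 powi k * x + b"
      using pcs l by force
    have lt: "xs!i < xs!(i+1)" using sub_less[OF sub, of i "i+1"] l by simp
    have "b = f (xs!i) - 2 powi k * xs!i" using kb lt by simp
    then have "dyadic b" using vals dyn l by (simp add: dyadic_diff dyadic_pow)
    then show "\<exists>(k::int) (b::real). dyadic b \<and>
                 (\<forall>x\<in>{xs!i .. xs!(i+1)}. f x = 2 powi k * x + b)" using kb by blast
  qed
  then show ?thesis using sub dy vals by blast
qed

lemma F_inverse:
  assumes "f \<in> thompsonF_set"
  shows "\<exists>g\<in>thompsonF_set. f \<circ> g = id \<and> g \<circ> f = id"
proof -
  obtain g' where hom: "homeomorphism {0..1} {0..1} f g'"
    using assms by (auto simp: thompsonF_set_def)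
  have fid: "\<And>x. x \<notin> {0..1} \<Longrightarrow> f x = x" using assms by (auto simp: thompsonF_set_def)
  obtain xs where sub: "subdivision01 xs" and dy: "\<forall>x\<in>set xs. dyadic x"
    and vals: "\<forall>i<length xs. dyadic (f (xs!i))"
    and pcs: "\<forall>i < length xs - 1. \<exists>(k::int) (b::real). dyadic b \<and>
                 (\<forall>x\<in>{xs!i .. xs!(i+1)}. f x = 2 powi k * x + b)"
    using F_pieces[OF assms] by blast
  have h1: "\<And>x. x \<in> {0..1} \<Longrightarrow> g' (f x) = x" and h2: "\<And>y. y \<in> {0..1} \<Longrightarrow> f (g' y) = y"
    and h3: "g' ` {0..1} = {0..1}" and h4: "f ` {0..1} = {0..1}"
    and h5: "continuous_on {0..1} g'" and h6: "continuous_on {0..1} f"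
    using hom by (auto simp: homeomorphism_def)
  define g where "g y = (if y \<in> {0..1} then g' y else y)" for y
  have fg: "f \<circ> g = id"
  proof
    fix y show "(f \<circ> g) y = id y"
      by (cases "y \<in> {0..1}") (auto simp: g_def h2 fid)
  qed
  have gf: "g \<circ> f = id"
  proof
    fix x show "(g \<circ> f) x = id x"
    proof (cases "x \<in> {0..1}")
      case True
      then have "f x \<in> {0..1}" using h4 by blast
      then show ?thesis using True by (simp add: g_def h1)
    next
      case False
      then show ?thesis using fid[OF False] False by (auto simp: g_def)
    qed
  qed
  have mono: "strict_mono_on {0..1} f" and f0: "f 0 = 0" and f1: "f 1 = 1"
    using F_mono[OF assms] by auto
  have xsb: "\<And>x. x \<in> set xs \<Longrightarrow> x \<in> {0..1}"
    using sub_bounds[OF sub] by (auto simp: in_set_conv_nth)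
  have "g \<in> thompsonF_set"
    unfolding thompsonF_set_def
  proof (intro CollectI conjI)
    show "\<forall>x. x \<notin> {0..1} \<longrightarrow> g x = x" unfolding g_def by auto
    have "homeomorphism {0..1} {0..1} g f"
      unfolding homeomorphism_def
    proof (intro conjI ballI)
      show "continuous_on {0..1} g" using h5 by (rule continuous_on_eq) (simp add: g_def)
      show "g ` {0..1} = {0..1}" using h3 by (auto simp: g_def image_def)
    qed (use h1 h2 h4 h6 in \<open>auto simp: g_def\<close>)
    then show "\<exists>f'. homeomorphism {0..1} {0..1} g f'" by blast
    define ys where "ys = map f xs"
    have lys: "length ys = length xs" by (simp add: ys_def)
    have ne: "xs \<noteq> []" using sub_ends(3)[OF sub] by auto
    have "subdivision01 ys"
      unfolding subdivision01_def
    proof (intro conjI)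
      show "2 \<le> length ys" using sub_ends(3)[OF sub] lys by simp
      have "sorted_wrt (<) xs" using sub by (simp add: subdivision01_def)
      then have "sorted_wrt (\<lambda>x y. f x < f y) xs"
        by (rule sorted_wrt_mono_rel[rotated]) (use mono xsb in \<open>auto simp: monotone_on_def\<close>)
      then show "sorted_wrt (<) ys" by (simp add: ys_def sorted_wrt_map)
      show "hd ys = 0" using sub ne f0 by (simp add: ys_def hd_map subdivision01_def)
      show "last ys = 1" using sub ne f1 by (simp add: ys_def last_map subdivision01_def)
    qed
    moreover have "\<forall>y\<in>set ys. dyadic y" using vals by (auto simp: ys_def in_set_conv_nth)
    moreover have "\<forall>i < length ys - 1. \<exists>(k::int) (b::real).
                 \<forall>y\<in>{ys!i .. ys!(i+1)}. g y = 2 powi k * y + b"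
    proof (intro allI impI)
      fix i assume l: "i < length ys - 1"
      obtain k b where kb: "\<forall>x\<in>{xs!i .. xs!(i+1)}. f x = 2 powi k * x + b"
        using pcs l lys by force
      have yi: "ys!i = f (xs!i)" "ys!(i+1) = f (xs!(i+1))" using l lys by (auto simp: ys_def)
      have lt: "xs!i < xs!(i+1)" using sub_less[OF sub, of i "i+1"] l lys by simp
      have fa: "f (xs!i) = 2 powi k * xs!i + b" "f (xs!(i+1)) = 2 powi k * xs!(i+1) + b"
        using kb lt by auto
      have bi: "xs!i \<in> {0..1}" "xs!(i+1) \<in> {0..1}" using sub_bounds[OF sub, of i] sub_bounds[OF sub, of "i+1"] l lys by auto
      have "\<forall>y\<in>{ys!i .. ys!(i+1)}. g y = 2 powi (-k) * y + (- b * 2 powi (-k))"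
      proof
        fix y assume y: "y \<in> {ys!i .. ys!(i+1)}"
        define x where "x = (y - b) / 2 powi k"
        have pk: "(2::real) powi k > 0" by simp
        have "xs!i \<le> x" using y yi fa pk by (simp add: x_def field_simps)
        moreover have "x \<le> xs!(i+1)" using y yi fa pk by (simp add: x_def field_simps)
        ultimately have xin: "x \<in> {xs!i .. xs!(i+1)}" by simp
        then have fx: "f x = y" using kb pk by (simp add: x_def)
        have x01: "x \<in> {0..1}" using xin bi by auto
        then have "y \<in> {0..1}" using fx h4 by blast
        then have "g y = x" using fx h1[OF x01] by (simp add: g_def)
        then show "g y = 2 powi (-k) * y + (- b * 2 powi (-k))"
          by (simp add: x_def power_int_minus_divide field_simps)
      qed
      then show "\<exists>(k::int) (b::real). \<forall>y\<in>{ys!i .. ys!(i+1)}. g y = 2 powi k * y + b" by blast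
    qed
    ultimately show "\<exists>xs. subdivision01 xs \<and> (\<forall>x\<in>set xs. dyadic x)
           \<and> (\<forall>i < length xs - 1. \<exists>(k::int) (b::real).
                 \<forall>x\<in>{xs!i .. xs!(i+1)}. g x = 2 powi k * x + b)" by blast
  qed
  then show ?thesis using fg gf by blast
qed

definition cell :: "nat \<Rightarrow> nat \<Rightarrow> real set" where
  "cell N j = {real j / 2^N .. (real j + 1) / 2^N}"

definition gridB :: "nat \<Rightarrow> nat \<Rightarrow> nat \<Rightarrow> (real \<Rightarrow> real) \<Rightarrow> bool" where
  "gridB N K V f \<longleftrightarrow> (\<forall>j<2^N. \<exists>(k::int) b. \<bar>k\<bar> \<le> int K \<and> lvl V b \<and> (\<forall>x\<in>cell N j. f x = 2 powi k * x + b))"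

lemma bound_ex:
  assumes "finite A" "\<forall>i\<in>A. \<exists>(k::int) b V. P i k b \<and> lvl V b"
  shows "\<exists>K V. \<forall>i\<in>A. \<exists>(k::int) b. P i k b \<and> \<bar>k\<bar> \<le> int K \<and> lvl V b"
  using assms
proof (induction A rule: finite_induct)
  case empty then show ?case by auto
next
  case (insert a A)
  then obtain K V where KV: "\<forall>i\<in>A. \<exists>(k::int) b. P i k b \<and> \<bar>k\<bar> \<le> int K \<and> lvl V b" by auto
  obtain k0 b0 V0 where a: "P a k0 b0" "lvl V0 b0" using insert.prems by auto
  have "\<forall>i\<in>insert a A. \<exists>k b. P i k b \<and> \<bar>k\<bar> \<le> int (max K (nat \<bar>k0\<bar>)) \<and> lvl (max V V0) b"
  proof
    fix i assume iA: "i \<in> insert a A"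
    show "\<exists>k b. P i k b \<and> \<bar>k\<bar> \<le> int (max K (nat \<bar>k0\<bar>)) \<and> lvl (max V V0) b"
    proof (cases "i = a")
      case True then show ?thesis using a lvl_mono[of V0 b0 "max V V0"]
        by (intro exI[of _ k0] exI[of _ b0]) auto
    next
      case False then have "i \<in> A" using iA by auto
      then obtain k b where "P i k b" "\<bar>k\<bar> \<le> int K" "lvl V b" using KV by blast
      then show ?thesis using lvl_mono[of V b "max V V0"] by (intro exI[of _ k] exI[of _ b]) auto
    qed
  qed
  then show ?case by blast
qed

lemma lvl_set:
  assumes "finite A" "\<forall>x\<in>A. dyadic x"
  shows "\<exists>V. \<forall>x\<in>A. lvl V x"
  using assms
proof (induction A rule: finite_induct)
  case empty then show ?case by auto
next
  case (insert a A)
  then obtain V where V: "\<forall>x\<in>A. lvl V x" by auto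
  obtain V0 where a: "lvl V0 a" using insert.prems by (auto simp: dyadic_lvl)
  show ?case using V a lvl_mono[of _ _ "max V V0"] by (intro exI[of _ "max V V0"]) auto
qed

lemma cell_sub:
  assumes "N \<le> M" "i < 2^M"
  shows "i div 2^(M-N) < 2^N" "cell M i \<subseteq> cell N (i div 2^(M-N))"
proof -
  define d where "d = (2::nat)^(M-N)"
  define c where "c = i div d"
  have d: "(2::nat)^M = 2^N * d" using assms(1) by (simp add: d_def power_add[symmetric])
  have dr: "(2::real)^M = 2^N * real d" using assms(1) by (simp add: d_def power_add[symmetric])
  have dpos: "d > 0" by (simp add: d_def)
  have i: "c*d \<le> i" by (simp add: c_def)
  have e1: "i = c*d + i mod d" by (simp add: c_def)
  have e2: "i mod d < d" using dpos by simp
  have "i + 1 \<le> c*d + d" using e1 e2 by linarith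
  then have i2: "i + 1 \<le> (c+1)*d" by (simp add: algebra_simps)
  show "i div 2^(M-N) < 2^N" using assms(2) d dpos by (simp add: d_def[symmetric] div_less_iff_less_mult)
  have ir: "real c * real d \<le> real i" using i by (metis of_nat_le_iff of_nat_mult)
  have ir2: "real i + 1 \<le> (real c + 1) * real d" using i2 by (metis of_nat_le_iff of_nat_mult of_nat_Suc of_nat_add of_nat_1)
  have "real c / 2^N \<le> real i / 2^M" using ir dpos unfolding dr by (simp add: field_simps)
  moreover have "(real i + 1) / 2^M \<le> (real c + 1) / 2^N"
  proof -
    have "(real i + 1) / (2^N * real d) \<le> ((real c + 1) * real d) / (2^N * real d)"
      by (rule divide_right_mono[OF ir2]) simp
    then show ?thesis using dpos by (simp add: dr)
  qed
  ultimately show "cell M i \<subseteq> cell N (i div 2^(M-N))"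
    unfolding cell_def c_def d_def by auto
qed

lemma to_grid:
  assumes "f \<in> thompsonF_set"
  shows "\<exists>N K V. gridB N K V f"
proof -
  obtain xs where sub: "subdivision01 xs" and dy: "\<forall>x\<in>set xs. dyadic x"
    and pcs: "\<forall>i < length xs - 1. \<exists>(k::int) (b::real). dyadic b \<and>
                 (\<forall>x\<in>{xs!i .. xs!(i+1)}. f x = 2 powi k * x + b)"
    using F_pieces[OF assms] by blast
  obtain N where N: "\<forall>x\<in>set xs. lvl N x" using lvl_set[of "set xs"] dy by auto
  have "\<forall>j\<in>{..<(2::nat)^N}. \<exists>(k::int) b V. (\<forall>x\<in>cell N j. f x = 2 powi k * x + b) \<and> lvl V b"
  proof
    fix j assume "j \<in> {..<(2::nat)^N}"
    then have j: "j < 2^N" by simp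
    then have jr: "real j / 2^N < 1" by (simp add: field_simps)
    have l2: "length xs \<ge> 2" using sub_ends[OF sub] by simp
    define I where "I = {i. i < length xs \<and> xs!i \<le> real j / 2^N}"
    have fI: "finite I" by (simp add: I_def)
    have "0 < length xs" using l2 by linarith
    then have "0 \<in> I" using sub_ends[OF sub] by (simp add: I_def)
    define i where "i = Max I"
    have "I \<noteq> {}" using \<open>0 \<in> I\<close> by auto
    then have iI: "i \<in> I" using Max_in[OF fI] by (simp add: i_def)
    have imax: "\<And>i'. i' \<in> I \<Longrightarrow> i' \<le> i" using fI by (simp add: i_def)
    have il: "i < length xs - 1"
    proof (rule ccontr)
      assume "\<not> i < length xs - 1"
      then have "i = length xs - 1" using iI by (auto simp: I_def)
      then show False using iI sub_ends[OF sub] jr by (auto simp: I_def)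
    qed
    have "i + 1 \<notin> I" using imax by fastforce
    then have gt: "real j / 2^N < xs!(i+1)" using il by (auto simp: I_def)
    have "xs!(i+1) \<in> set xs" using il by simp
    then obtain m where m: "xs!(i+1) = of_int m / 2^N" using N by (auto simp: lvl_def)
    have "real j < of_int m" using gt m by (simp add: field_simps)
    then have "real j + 1 \<le> of_int m" by (metis of_int_of_nat_eq of_int_less_iff zless_imp_add1_zle of_int_1 of_int_add of_int_le_iff)
    then have up: "(real j + 1) / 2^N \<le> xs!(i+1)" using m by (simp add: divide_right_mono)
    have lo: "xs!i \<le> real j / 2^N" using iI by (simp add: I_def)
    have csub: "cell N j \<subseteq> {xs!i .. xs!(i+1)}" using up lo by (auto simp: cell_def)
    obtain k b where kb: "dyadic b" "\<forall>x\<in>{xs!i .. xs!(i+1)}. f x = 2 powi k * x + b"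
      using pcs il by blast
    obtain V where "lvl V b" using kb(1) by (auto simp: dyadic_lvl)
    then show "\<exists>(k::int) b V. (\<forall>x\<in>cell N j. f x = 2 powi k * x + b) \<and> lvl V b"
      using kb(2) csub by blast
  qed
  from bound_ex[OF _ this] obtain K V where
    "\<forall>j\<in>{..<(2::nat)^N}. \<exists>(k::int) b. (\<forall>x\<in>cell N j. f x = 2 powi k * x + b) \<and> \<bar>k\<bar> \<le> int K \<and> lvl V b"
    by auto
  then have "gridB N K V f" unfolding gridB_def by (metis lessThan_iff)
  then show ?thesis by blast
qed

lemma from_grid:
  assumes "\<forall>x. x \<notin> {0..1} \<longrightarrow> f x = x" "\<exists>g. homeomorphism {0..1} {0..1} f g"
    and "\<forall>j<(2::nat)^N. \<exists>(k::int) b. \<forall>x\<in>cell N j. f x = 2 powi k * x + b"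
  shows "f \<in> thompsonF_set"
  unfolding thompsonF_set_def
proof (intro CollectI conjI)
  show "\<forall>x. x \<notin> {0..1} \<longrightarrow> f x = x" "\<exists>g. homeomorphism {0..1} {0..1} f g" using assms by auto
  define xs where "xs = map (\<lambda>j. real j / 2^N) [0..<2^N+1]"
  have lxs: "length xs = 2^N + 1" by (simp add: xs_def)
  have nth: "\<And>i. i < 2^N + 1 \<Longrightarrow> xs!i = real i / 2^N" by (simp add: xs_def del: upt_Suc)
  have "subdivision01 xs"
    unfolding subdivision01_def
  proof (intro conjI)
    show "2 \<le> length xs" using lxs by simp
    have "sorted_wrt (\<lambda>x y. real x / 2^N < real y / 2^N) [0..<2^N+1]"
      by (rule sorted_wrt_mono_rel[OF _ sorted_wrt_upt]) (simp add: divide_strict_right_mono)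
    then show "sorted_wrt (<) xs" by (simp add: xs_def sorted_wrt_map del: upt_Suc)
    have ne: "xs \<noteq> []" using lxs by auto
    show "hd xs = 0" using nth[of 0] ne by (simp add: hd_conv_nth)
    show "last xs = 1" using nth[of "2^N"] ne lxs by (simp add: last_conv_nth)
  qed
  moreover have "\<forall>x\<in>set xs. dyadic x"
  proof -
    have dj: "dyadic (real j / 2^N)" for j
      unfolding dyadic_def by (rule exI[of _ "int j"], rule exI[of _ N]) simp
    show ?thesis unfolding xs_def set_map using dj by blast
  qed
  moreover have "\<forall>i < length xs - 1. \<exists>(k::int) (b::real).
                 \<forall>x\<in>{xs!i .. xs!(i+1)}. f x = 2 powi k * x + b"
  proof (intro allI impI)
    fix i assume "i < length xs - 1"
    then have i: "i < 2^N" using lxs by simp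
    then have "{xs!i .. xs!(i+1)} = cell N i" using nth[of i] nth[of "i+1"] by (simp add: cell_def)
    then show "\<exists>(k::int) (b::real). \<forall>x\<in>{xs!i .. xs!(i+1)}. f x = 2 powi k * x + b"
      using assms(3) i by simp
  qed
  ultimately show "\<exists>xs. subdivision01 xs \<and> (\<forall>x\<in>set xs. dyadic x)
           \<and> (\<forall>i < length xs - 1. \<exists>(k::int) (b::real).
                 \<forall>x\<in>{xs!i .. xs!(i+1)}. f x = 2 powi k * x + b)" by blast
qed

lemma refine:
  assumes "gridB N K V g" "N + K + V \<le> M" "i < 2^M"
  shows "\<exists>(k::int) (q::int). \<bar>k\<bar> \<le> int K \<and>
     (\<forall>x\<in>cell M i. g x = (of_int q + 2^M * x) / 2^(nat (int M - k)))"
proof -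
  have NM: "N \<le> M" using assms(2) by simp
  define j where "j = i div 2^(M-N)"
  have j: "j < 2^N" "cell M i \<subseteq> cell N j" using cell_sub[OF NM assms(3)] by (auto simp: j_def)
  obtain k b where kb: "\<bar>k\<bar> \<le> int K" "lvl V b" "\<forall>x\<in>cell N j. g x = 2 powi k * x + b"
    using assms(1) j(1) unfolding gridB_def by blast
  obtain m where m: "b = of_int m / 2^V" using kb(2) by (auto simp: lvl_def)
  define L where "L = nat (int M - k)"
  have Li: "int L = int M - k" using kb(1) assms(2) by (simp add: L_def)
  have LV: "V \<le> L" using Li kb(1) assms(2) by linarith
  have pk: "(2::real) powi k = 2^M / 2^L" by (rule pow2_split) (use Li in simp)
  have pL: "(2::real)^L = 2^V * 2^(L-V)" using LV by (simp add: power_add[symmetric])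
  define q where "q = m * 2^(L-V)"
  have "\<forall>x\<in>cell M i. g x = (of_int q + 2^M * x) / 2^L"
  proof
    fix x assume "x \<in> cell M i"
    then have "g x = 2 powi k * x + b" using kb(3) j(2) by auto
    also have "\<dots> = (of_int q + 2^M * x) / 2^L" unfolding pk m q_def pL
      by (simp add: field_simps)
    finally show "g x = (of_int q + 2^M * x) / 2^L" .
  qed
  then show ?thesis using kb(1) unfolding L_def by blast
qed

lemma grid_compose:
  assumes f: "gridB Nf Kf Vf f" and g: "gridB Ng Kg Vg g" and g01: "\<forall>x\<in>{0..1}. g x \<in> {0..1}"
    and M: "M = Ng + Kg + Vg + Nf"
  shows "\<forall>i<(2::nat)^M. \<exists>(k::int) b. \<forall>x\<in>cell M i. (f \<circ> g) x = 2 powi k * x + b"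
proof (intro allI impI)
  fix i :: nat assume i: "i < 2^M"
  obtain k q where kq: "\<bar>k\<bar> \<le> int Kg" "\<forall>x\<in>cell M i. g x = (of_int q + 2^M * x) / 2^(nat (int M - k))"
    using refine[OF g _ i] M by auto
  define L where "L = nat (int M - k)"
  have Li: "int L = int M - k" using kq(1) M by (simp add: L_def)
  have LN: "Nf \<le> L" using Li kq(1) M by linarith
  have pk: "(2::real) powi k = 2^M / 2^L" by (rule pow2_split) (use Li in simp)
  have gx: "\<And>x. x \<in> cell M i \<Longrightarrow> g x = (of_int q + 2^M * x) / 2^L" using kq(2) by (simp add: L_def)
  define p where "p = q + int i"
  have x0: "real i / 2^M \<in> cell M i" "real i / 2^M \<in> {0..1}" using i by (auto simp: cell_def field_simps)
  have x1: "(real i + 1) / 2^M \<in> cell M i" "(real i + 1) / 2^M \<in> {0..1}" using i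
    by (auto simp: cell_def field_simps) (metis of_nat_less_iff of_nat_Suc of_nat_le_iff Suc_leI of_nat_numeral of_nat_power add.commute)
  have g0: "g (real i / 2^M) = of_int p / 2^L" using gx[OF x0(1)] by (simp add: p_def)
  have g1: "g ((real i + 1) / 2^M) = (of_int p + 1) / 2^L" using gx[OF x1(1)] by (simp add: p_def)
  have "0 \<le> of_int p / (2::real)^L" using g0 g01 x0(2) by fastforce
  then have p0: "0 \<le> p" using pos_le_divide_eq[of "(2::real)^L" 0 "of_int p"] by simp
  have "(of_int p + 1) / (2::real)^L \<le> 1" using g1 g01 x1(2) by fastforce
  then have "of_int p + 1 \<le> (2::real)^L" by (simp add: divide_le_eq)
  then have p1: "p + 1 \<le> 2^L" by (metis of_int_1 of_int_add of_int_le_iff of_int_numeral of_int_power)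
  define n where "n = nat p"
  have n: "n < 2^L" using p0 p1 by (simp add: n_def nat_less_iff)
  have nr: "real n = of_int p" using p0 by (simp add: n_def)
  define c where "c = n div 2^(L-Nf)"
  have c: "c < 2^Nf" "cell L n \<subseteq> cell Nf c" using cell_sub[OF LN n] by (auto simp: c_def)
  obtain k' b' where kb': "\<forall>y\<in>cell Nf c. f y = 2 powi k' * y + b'"
    using f c(1) unfolding gridB_def by blast
  have "\<forall>x\<in>cell M i. (f \<circ> g) x = 2 powi (k' + k) * x + (2 powi k' * (of_int q / 2^L) + b')"
  proof
    fix x assume x: "x \<in> cell M i"
    have "g x \<in> cell L n"
    proof -
      have "real i / 2^M \<le> x" "x \<le> (real i + 1) / 2^M" using x by (auto simp: cell_def)
      then have a: "real i \<le> 2^M * x" "2^M * x \<le> real i + 1" by (simp_all add: field_simps)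
      have "real n / 2^L \<le> g x" unfolding gx[OF x] nr p_def using a
        by (simp add: divide_right_mono)
      moreover have "g x \<le> (real n + 1) / 2^L" unfolding gx[OF x] nr p_def using a
        by (simp add: divide_right_mono)
      ultimately show ?thesis by (simp add: cell_def)
    qed
    then have "f (g x) = 2 powi k' * g x + b'" using kb' c(2) by auto
    also have "\<dots> = 2 powi (k' + k) * x + (2 powi k' * (of_int q / 2^L) + b')"
      unfolding gx[OF x] power_int_add[of "2::real", OF disjI1, simplified] pk by (simp add: field_simps)
    finally show "(f \<circ> g) x = 2 powi (k' + k) * x + (2 powi k' * (of_int q / 2^L) + b')" by simp
  qed
  then show "\<exists>(k::int) b. \<forall>x\<in>cell M i. (f \<circ> g) x = 2 powi k * x + b" by blast
qed

lemma F_compose: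
  assumes "f \<in> thompsonF_set" "g \<in> thompsonF_set"
  shows "f \<circ> g \<in> thompsonF_set"
proof -
  obtain Nf Kf Vf where f: "gridB Nf Kf Vf f" using to_grid[OF assms(1)] by blast
  obtain Ng Kg Vg where g: "gridB Ng Kg Vg g" using to_grid[OF assms(2)] by blast
  have g01: "\<forall>x\<in>{0..1}. g x \<in> {0..1}" using F_mono(4)[OF assms(2)] by blast
  obtain hf where hf: "homeomorphism {0..1} {0..1} f hf" using assms(1) by (auto simp: thompsonF_set_def)
  obtain hg where hg: "homeomorphism {0..1} {0..1} g hg" using assms(2) by (auto simp: thompsonF_set_def)
  have fid: "\<forall>x. x \<notin> {0..1} \<longrightarrow> f x = x" "\<forall>x. x \<notin> {0..1} \<longrightarrow> g x = x"
    using assms by (auto simp: thompsonF_set_def)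
  show ?thesis
  proof (rule from_grid)
    show "\<forall>x. x \<notin> {0..1} \<longrightarrow> (f \<circ> g) x = x" using fid by simp
    show "\<exists>h. homeomorphism {0..1} {0..1} (f \<circ> g) h"
      using homeomorphism_compose[OF hg hf] by blast
    show "\<forall>i<(2::nat)^(Ng + Kg + Vg + Nf). \<exists>(k::int) b. \<forall>x\<in>cell (Ng + Kg + Vg + Nf) i. (f \<circ> g) x = 2 powi k * x + b"
      by (rule grid_compose[OF f g g01 refl])
  qed
qed

lemma tF_simps [simp]: "carrier thompsonF = thompsonF_set" "mult thompsonF f g = f \<circ> g" "one thompsonF = id"
  by (simp_all add: thompsonF_def)

lemma id_in_F: "id \<in> thompsonF_set"
  unfolding thompsonF_set_def
proof (intro CollectI conjI)
  show "\<forall>x. x \<notin> {0..1} \<longrightarrow> id x = x" by simp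
  show "\<exists>g. homeomorphism {0..1} {0..1} id g"
    unfolding id_def using homeomorphism_ident by blast
  have "subdivision01 [0,1]" by (simp add: subdivision01_def)
  moreover have "\<forall>x\<in>set [0,1::real]. dyadic x" by (auto simp: dyadic_def intro: exI[of _ 0] exI[of _ 1])
  moreover have "\<forall>i < length [0,1::real] - 1. \<exists>(k::int) (b::real).
                 \<forall>x\<in>{[0,1::real]!i .. [0,1::real]!(i+1)}. id x = 2 powi k * x + b"
    by (intro allI impI exI[of _ 0]) auto
  ultimately show "\<exists>xs. subdivision01 xs \<and> (\<forall>x\<in>set xs. dyadic x)
           \<and> (\<forall>i < length xs - 1. \<exists>(k::int) (b::real).
                 \<forall>x\<in>{xs!i .. xs!(i+1)}. id x = 2 powi k * x + b)" by blast
qed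

lemma group_F: "group thompsonF"
proof (rule groupI)
  show "\<And>x y. x \<in> carrier thompsonF \<Longrightarrow> y \<in> carrier thompsonF \<Longrightarrow> x \<otimes>\<^bsub>thompsonF\<^esub> y \<in> carrier thompsonF"
    by (simp add: F_compose)
  show "\<one>\<^bsub>thompsonF\<^esub> \<in> carrier thompsonF" by (simp add: id_in_F)
  show "\<And>x y z. x \<in> carrier thompsonF \<Longrightarrow> y \<in> carrier thompsonF \<Longrightarrow> z \<in> carrier thompsonF \<Longrightarrow>
      x \<otimes>\<^bsub>thompsonF\<^esub> y \<otimes>\<^bsub>thompsonF\<^esub> z = x \<otimes>\<^bsub>thompsonF\<^esub> (y \<otimes>\<^bsub>thompsonF\<^esub> z)"
    by (simp add: o_assoc)
  show "\<And>x. x \<in> carrier thompsonF \<Longrightarrow> \<one>\<^bsub>thompsonF\<^esub> \<otimes>\<^bsub>thompsonF\<^esub> x = x" by simp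
  show "\<And>x. x \<in> carrier thompsonF \<Longrightarrow> \<exists>y\<in>carrier thompsonF. y \<otimes>\<^bsub>thompsonF\<^esub> x = \<one>\<^bsub>thompsonF\<^esub>"
    using F_inverse by fastforce
qed

lemma inv_F:
  assumes "f \<in> thompsonF_set"
  shows "inv\<^bsub>thompsonF\<^esub> f \<in> thompsonF_set" "f \<circ> inv\<^bsub>thompsonF\<^esub> f = id" "inv\<^bsub>thompsonF\<^esub> f \<circ> f = id"
proof -
  obtain g where g: "g \<in> thompsonF_set" "f \<circ> g = id" "g \<circ> f = id" using F_inverse[OF assms] by blast
  have "inv\<^bsub>thompsonF\<^esub> f = g" using group.inv_equality[OF group_F, of g f] g assms by simp
  then show "inv\<^bsub>thompsonF\<^esub> f \<in> thompsonF_set" "f \<circ> inv\<^bsub>thompsonF\<^esub> f = id" "inv\<^bsub>thompsonF\<^esub> f \<circ> f = id"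
    using g by auto
qed

definition Sset :: "(real \<Rightarrow> real) set" where
  "Sset = {f \<in> thompsonF_set. \<exists>e>0. \<forall>x. (x \<le> e \<or> 1 - e \<le> x) \<longrightarrow> f x = x}"

lemma S_subgroup: "subgroup Sset thompsonF"
proof
  show "Sset \<subseteq> carrier thompsonF" by (auto simp: Sset_def)
  show "\<one>\<^bsub>thompsonF\<^esub> \<in> Sset" using id_in_F by (auto simp: Sset_def intro: exI[of _ 1])
  fix f g assume f: "f \<in> Sset" and g: "g \<in> Sset"
  obtain e1 where e1: "e1 > 0" "\<forall>x. (x \<le> e1 \<or> 1 - e1 \<le> x) \<longrightarrow> f x = x" using f by (auto simp: Sset_def)
  obtain e2 where e2: "e2 > 0" "\<forall>x. (x \<le> e2 \<or> 1 - e2 \<le> x) \<longrightarrow> g x = x" using g by (auto simp: Sset_def)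
  have "\<forall>x. (x \<le> min e1 e2 \<or> 1 - min e1 e2 \<le> x) \<longrightarrow> (f \<circ> g) x = x"
    using e1 e2 by auto
  then show "f \<otimes>\<^bsub>thompsonF\<^esub> g \<in> Sset" using f g e1 e2 F_compose
    by (auto simp: Sset_def intro!: exI[of _ "min e1 e2"])
next
  fix f assume f: "f \<in> Sset"
  then have fF: "f \<in> thompsonF_set" by (simp add: Sset_def)
  obtain e1 where e1: "e1 > 0" "\<forall>x. (x \<le> e1 \<or> 1 - e1 \<le> x) \<longrightarrow> f x = x" using f by (auto simp: Sset_def)
  have "\<forall>x. (x \<le> e1 \<or> 1 - e1 \<le> x) \<longrightarrow> (inv\<^bsub>thompsonF\<^esub> f) x = x"
  proof (intro allI impI)
    fix x assume "x \<le> e1 \<or> 1 - e1 \<le> x"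
    then have "f x = x" using e1 by auto
    then show "(inv\<^bsub>thompsonF\<^esub> f) x = x" using inv_F(3)[OF fF] by (metis comp_apply id_apply)
  qed
  then show "inv\<^bsub>thompsonF\<^esub> f \<in> Sset" using inv_F(1)[OF fF] e1 by (auto simp: Sset_def)
qed

definition near0 :: "real \<Rightarrow> real \<Rightarrow> (real \<Rightarrow> real) \<Rightarrow> bool" where
  "near0 c e f \<longleftrightarrow> c > 0 \<and> e > 0 \<and> (\<forall>x. x \<le> e \<longrightarrow> f x = (if x \<le> 0 then x else c * x))"

definition near1 :: "real \<Rightarrow> real \<Rightarrow> (real \<Rightarrow> real) \<Rightarrow> bool" where
  "near1 c e f \<longleftrightarrow> c > 0 \<and> e > 0 \<and> (\<forall>x. 1 - e \<le> x \<longrightarrow> f x = (if 1 \<le> x then x else 1 - c * (1 - x)))"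

definition rfl :: "(real \<Rightarrow> real) \<Rightarrow> real \<Rightarrow> real" where
  "rfl f = (\<lambda>y. 1 - f (1 - y))"

lemma near1_rfl: "near1 c e f \<Longrightarrow> near0 c e (rfl f)"
  unfolding near0_def near1_def rfl_def by auto

lemma rfl_comp: "rfl (f \<circ> g) = rfl f \<circ> rfl g"
  by (auto simp: rfl_def)

lemma rfl_id: "rfl id = id"
  by (auto simp: rfl_def)

lemma F_near0:
  assumes "f \<in> thompsonF_set"
  shows "\<exists>c e. near0 c e f"
proof -
  obtain xs where sub: "subdivision01 xs"
    and pcs: "\<forall>i < length xs - 1. \<exists>(k::int) (b::real). dyadic b \<and>
                 (\<forall>x\<in>{xs!i .. xs!(i+1)}. f x = 2 powi k * x + b)"
    using F_pieces[OF assms] by blast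
  have l: "length xs \<ge> 2" using sub_ends[OF sub] by simp
  obtain k b where kb: "\<forall>x\<in>{xs!0 .. xs!(0+1)}. f x = 2 powi k * x + b" using pcs l by force
  have x0: "xs!0 = 0" using sub_ends[OF sub] by simp
  have x1: "0 < xs!1" using sub_less[OF sub, of 0 1] l x0 by simp
  have "f 0 = b" using kb x0 x1 by auto
  then have b: "b = 0" using F_mono(2)[OF assms] by simp
  have fid: "\<And>x. x \<notin> {0..1} \<Longrightarrow> f x = x" using assms by (auto simp: thompsonF_set_def)
  have "near0 (2 powi k) (xs!1) f"
    unfolding near0_def
  proof (intro conjI allI impI)
    fix x assume x: "x \<le> xs!1"
    show "f x = (if x \<le> 0 then x else 2 powi k * x)"
    proof (cases "x < 0")
      case True then show ?thesis using fid by auto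
    next
      case False then show ?thesis using kb x x0 b F_mono(2)[OF assms] by auto
    qed
  qed (use x1 in auto)
  then show ?thesis by blast
qed

lemma F_near1:
  assumes "f \<in> thompsonF_set"
  shows "\<exists>c e. near1 c e f"
proof -
  obtain xs where sub: "subdivision01 xs"
    and pcs: "\<forall>i < length xs - 1. \<exists>(k::int) (b::real). dyadic b \<and>
                 (\<forall>x\<in>{xs!i .. xs!(i+1)}. f x = 2 powi k * x + b)"
    using F_pieces[OF assms] by blast
  have l: "length xs \<ge> 2" using sub_ends[OF sub] by simp
  define n where "n = length xs - 2"
  have n1: "n + 1 = length xs - 1" using l by (simp add: n_def)
  have nl: "n < length xs - 1" using l by (simp add: n_def)
  obtain k b where kb: "\<forall>x\<in>{xs!n .. xs!(n+1)}. f x = 2 powi k * x + b" using pcs nl by blast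
  have x1: "xs!(n+1) = 1" using sub_ends[OF sub] n1 by simp
  have x0: "xs!n < 1" using sub_less[OF sub, of n "n+1"] l n1 x1 by simp
  have "f 1 = 2 powi k + b" using kb x0 x1 by auto
  then have b: "b = 1 - 2 powi k" using F_mono(3)[OF assms] by simp
  have fid: "\<And>x. x \<notin> {0..1} \<Longrightarrow> f x = x" using assms by (auto simp: thompsonF_set_def)
  have "near1 (2 powi k) (1 - xs!n) f"
    unfolding near1_def
  proof (intro conjI allI impI)
    fix x assume x: "1 - (1 - xs!n) \<le> x"
    show "f x = (if 1 \<le> x then x else 1 - 2 powi k * (1 - x))"
    proof (cases "1 < x")
      case True then show ?thesis using fid by auto
    next
      case False then show ?thesis using kb x x1 b F_mono(3)[OF assms] by (auto simp: algebra_simps)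
    qed
  qed (use x0 in auto)
  then show ?thesis by blast
qed

lemma near0_inv:
  assumes "near0 c e f" "near0 c' e' f'" "f' \<circ> f = id"
  shows "c' * c = 1"
proof -
  have p: "c > 0" "e > 0" "c' > 0" "e' > 0" using assms by (auto simp: near0_def)
  define x where "x = min e (e' / c)"
  have x: "0 < x" "x \<le> e" using p by (auto simp: x_def)
  have "x \<le> e' / c" by (simp add: x_def)
  then have x3: "c * x \<le> e'" using p by (simp add: pos_le_divide_eq mult.commute)
  have "f x = c * x" using assms(1) x by (auto simp: near0_def)
  moreover have "f' (c * x) = c' * (c * x)"
  proof -
    have "\<not> c * x \<le> 0" using x p by (simp add: not_le)
    then show ?thesis using assms(2) x3 by (simp add: near0_def)
  qed
  moreover have "f' (f x) = x" using assms(3) by (metis comp_apply id_apply)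
  ultimately have "c' * c * x = x" by simp
  then show ?thesis using x(1) by simp
qed

lemma comm0:
  assumes a: "near0 ca ea a" and b: "near0 cb eb b" and a': "near0 ca' ea' a'" and b': "near0 cb' eb' b'"
    and ia: "ca * ca' = 1" and ib: "cb * cb' = 1"
  shows "\<exists>e>0. \<forall>x. x \<le> e \<longrightarrow> (a \<circ> b \<circ> a' \<circ> b') x = x"
proof -
  have p: "ca > 0" "ea > 0" "cb > 0" "eb > 0" "ca' > 0" "ea' > 0" "cb' > 0" "eb' > 0"
    using a b a' b' by (auto simp: near0_def)
  define e where "e = min eb' (min (ea' / cb') (min (eb / (ca' * cb')) (ea / (cb * ca' * cb'))))"
  have e: "e > 0" using p by (simp add: e_def)
  have "(a \<circ> b \<circ> a' \<circ> b') x = x" if x: "x \<le> e" for x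
  proof (cases "x \<le> 0")
    case True
    have "x \<le> eb'" "x \<le> ea'" "x \<le> eb" "x \<le> ea" using True p by auto
    then show ?thesis using True a b a' b' by (simp add: near0_def)
  next
    case False
    have x1: "x \<le> eb'" using x by (simp add: e_def)
    have x2: "cb' * x \<le> ea'" using x p by (simp add: e_def pos_le_divide_eq mult.commute)
    have x3: "ca' * (cb' * x) \<le> eb" using x p by (simp add: e_def pos_le_divide_eq mult.commute mult.left_commute)
    have x4: "cb * (ca' * (cb' * x)) \<le> ea" using x p by (simp add: e_def pos_le_divide_eq mult.commute mult.left_commute)
    have q1: "\<not> cb' * x \<le> 0" "\<not> ca' * (cb' * x) \<le> 0" "\<not> cb * (ca' * (cb' * x)) \<le> 0"
      using False p by (simp_all add: not_le)
    have s1: "b' x = cb' * x" using b' x1 False by (simp add: near0_def)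
    have s2: "a' (cb' * x) = ca' * (cb' * x)" using a' x2 q1 by (simp add: near0_def)
    have s3: "b (ca' * (cb' * x)) = cb * (ca' * (cb' * x))" using b x3 q1 by (simp add: near0_def)
    have s4: "a (cb * (ca' * (cb' * x))) = ca * (cb * (ca' * (cb' * x)))" using a x4 q1 by (simp add: near0_def)
    have "ca * (cb * (ca' * (cb' * x))) = (ca * ca') * (cb * cb') * x" by (simp add: algebra_simps)
    then show ?thesis using s1 s2 s3 s4 ia ib by simp
  qed
  then show ?thesis using e by blast
qed

lemma comm_in_S:
  assumes f: "f \<in> thompsonF_set" and g: "g \<in> thompsonF_set"
  shows "f \<otimes>\<^bsub>thompsonF\<^esub> g \<otimes>\<^bsub>thompsonF\<^esub> inv\<^bsub>thompsonF\<^esub> f \<otimes>\<^bsub>thompsonF\<^esub> inv\<^bsub>thompsonF\<^esub> g \<in> Sset"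
proof -
  define f' where "f' = inv\<^bsub>thompsonF\<^esub> f"
  define g' where "g' = inv\<^bsub>thompsonF\<^esub> g"
  have f': "f' \<in> thompsonF_set" "f' \<circ> f = id" using inv_F[OF f] by (auto simp: f'_def)
  have g': "g' \<in> thompsonF_set" "g' \<circ> g = id" using inv_F[OF g] by (auto simp: g'_def)
  have cF: "f \<circ> g \<circ> f' \<circ> g' \<in> thompsonF_set" using f g f' g' by (simp add: F_compose)
  obtain ca ea cb eb ca' ea' cb' eb' where n0: "near0 ca ea f" "near0 cb eb g" "near0 ca' ea' f'" "near0 cb' eb' g'"
    using F_near0 f g f' g' by metis
  have "ca' * ca = 1" "cb' * cb = 1" using near0_inv n0 f' g' by blast+
  then obtain e0 where e0: "e0 > 0" "\<forall>x. x \<le> e0 \<longrightarrow> (f \<circ> g \<circ> f' \<circ> g') x = x"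
    using comm0[OF n0] by (auto simp: mult.commute)
  obtain ka ha kb hb ka' ha' kb' hb' where n1: "near1 ka ha f" "near1 kb hb g" "near1 ka' ha' f'" "near1 kb' hb' g'"
    using F_near1 f g f' g' by metis
  have r0: "near0 ka ha (rfl f)" "near0 kb hb (rfl g)" "near0 ka' ha' (rfl f')" "near0 kb' hb' (rfl g')"
    using n1 by (auto intro: near1_rfl)
  have "rfl f' \<circ> rfl f = id" "rfl g' \<circ> rfl g = id" using f'(2) g'(2) rfl_comp rfl_id by metis+
  then have "ka' * ka = 1" "kb' * kb = 1" using near0_inv r0 by blast+
  then obtain e1 where e1: "e1 > 0" "\<forall>y. y \<le> e1 \<longrightarrow> (rfl f \<circ> rfl g \<circ> rfl f' \<circ> rfl g') y = y"
    using comm0[OF r0] by (auto simp: mult.commute)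
  have "\<forall>x. (x \<le> min e0 e1 \<or> 1 - min e0 e1 \<le> x) \<longrightarrow> (f \<circ> g \<circ> f' \<circ> g') x = x"
  proof (intro allI impI)
    fix x assume "x \<le> min e0 e1 \<or> 1 - min e0 e1 \<le> x"
    then show "(f \<circ> g \<circ> f' \<circ> g') x = x"
    proof
      assume "x \<le> min e0 e1" then show ?thesis using e0 by auto
    next
      assume "1 - min e0 e1 \<le> x"
      then have "1 - x \<le> e1" by auto
      then have "(rfl f \<circ> rfl g \<circ> rfl f' \<circ> rfl g') (1 - x) = 1 - x" using e1 by blast
      then have "rfl (f \<circ> g \<circ> f' \<circ> g') (1 - x) = 1 - x" by (simp add: rfl_comp)
      then show ?thesis by (simp add: rfl_def)
    qed
  qed
  then show ?thesis using cF e0 e1 unfolding f'_def g'_def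
    by (auto simp: Sset_def intro!: exI[of _ "min e0 e1"])
qed

lemma derived_S: "derived thompsonF (carrier thompsonF) \<subseteq> Sset"
  unfolding derived_def
proof (rule group.generate_subgroup_incl[OF group_F _ S_subgroup])
  show "derived_set thompsonF (carrier thompsonF) \<subseteq> Sset"
    using comm_in_S by auto
qed

fun bin :: "nat \<Rightarrow> nat \<Rightarrow> bool list" where
  "bin 0 j = []"
| "bin (Suc M) j = bin M (j div 2) @ [odd j]"

lemma len_bin [simp]: "length (bin M j) = M"
  by (induction M arbitrary: j) auto

lemma word_val_snoc: "word_val (xs @ [b]) = word_val xs + (if b then 1 else 0) / 2^(Suc (length xs))"
  unfolding word_val_def by (simp add: nth_append)

lemma mod_split2: "(j::nat) mod 2^(Suc M) = 2 * ((j div 2) mod 2^M) + j mod 2"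
  using mod_mult2_eq[of j 2 "2^M"] by simp

lemma word_val_bin: "word_val (bin M j) = real (j mod 2^M) / 2^M"
proof (induction M arbitrary: j)
  case 0 then show ?case by (simp add: word_val_def)
next
  case (Suc M)
  have "word_val (bin (Suc M) j) = real ((j div 2) mod 2^M) / 2^M + (if odd j then 1 else 0) / 2^(Suc M)"
    by (simp add: word_val_snoc Suc)
  also have "\<dots> = (2 * real ((j div 2) mod 2^M) + real (j mod 2)) / 2^(Suc M)"
    by (auto simp: field_simps odd_iff_mod_2_eq_one even_iff_mod_2_eq_zero)
  also have "\<dots> = real (j mod 2^(Suc M)) / 2^(Suc M)"
    unfolding mod_split2[of j M] by simp
  finally show ?case .
qed

lemma True_bin: "True \<in> set (bin M j) \<longleftrightarrow> j mod 2^M \<noteq> 0"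
proof (induction M arbitrary: j)
  case 0 then show ?case by simp
next
  case (Suc M)
  define r where "r = (j div 2) mod 2^M"
  have "True \<in> set (bin (Suc M) j) \<longleftrightarrow> r \<noteq> 0 \<or> odd j" by (auto simp: Suc r_def)
  also have "\<dots> \<longleftrightarrow> 2 * r + j mod 2 \<noteq> 0" by presburger
  also have "\<dots> \<longleftrightarrow> j mod 2^(Suc M) \<noteq> 0" unfolding mod_split2[of j M] r_def by simp
  finally show ?case .
qed

lemma False_bin: "False \<in> set (bin M j) \<longleftrightarrow> j mod 2^M \<noteq> 2^M - 1"
proof (induction M arbitrary: j)
  case 0 then show ?case by simp
next
  case (Suc M)
  define P :: nat where "P = 2^M"
  define r where "r = (j div 2) mod 2^M"
  have r: "r < P" by (simp add: r_def P_def)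
  have P: "P > 0" by (simp add: P_def)
  have "False \<in> set (bin (Suc M) j) \<longleftrightarrow> r \<noteq> P - 1 \<or> even j" by (auto simp: Suc r_def P_def)
  also have "\<dots> \<longleftrightarrow> 2 * r + j mod 2 \<noteq> 2 * P - 1" using r P by presburger
  also have "\<dots> \<longleftrightarrow> j mod 2^(Suc M) \<noteq> 2^(Suc M) - 1" unfolding mod_split2[of j M] r_def P_def by simp
  finally show ?case .
qed

lemma int_half: "2 * (f::int) \<le> z \<Longrightarrow> z < 2 * f + 2 \<Longrightarrow> z = 2 * f + (if odd z then 1 else 0)"
  by presburger

lemma floor_double:
  assumes "0 \<le> (a::real)"
  shows "\<lfloor>2 * a\<rfloor> = 2 * \<lfloor>a\<rfloor> + (if odd (nat \<lfloor>2 * a\<rfloor>) then 1 else 0)"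
proof -
  have l: "2 * \<lfloor>a\<rfloor> \<le> \<lfloor>2 * a\<rfloor>" by (simp add: le_floor_iff)
  have u: "\<lfloor>2 * a\<rfloor> < 2 * \<lfloor>a\<rfloor> + 2"
  proof -
    have "2 * a < of_int (2 * \<lfloor>a\<rfloor> + 2)" by simp linarith
    then show ?thesis by (simp add: floor_less_iff)
  qed
  have z: "0 \<le> \<lfloor>2 * a\<rfloor>" using assms by simp
  have "odd (nat \<lfloor>2 * a\<rfloor>) \<longleftrightarrow> odd \<lfloor>2 * a\<rfloor>" using even_nat_iff[OF z] by simp
  then show ?thesis using int_half[OF l u] by simp
qed

lemma partial_bin:
  fixes y :: real
  assumes "0 \<le> y" "y < 1"
  shows "(\<Sum>i<n. (if odd (nat \<lfloor>y * 2^(Suc i)\<rfloor>) then 1 else 0) / 2^(Suc i)) = of_int \<lfloor>y * 2^n\<rfloor> / (2::real)^n"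
proof (induction n)
  case 0 then show ?case using assms by (simp add: floor_eq_iff)
next
  case (Suc n)
  define z where "z = \<lfloor>y * 2^(Suc n)\<rfloor>"
  define w where "w = \<lfloor>y * 2^n\<rfloor>"
  have fd: "z = 2 * w + (if odd (nat z) then 1 else 0)"
    using floor_double[of "y * 2^n"] assms by (simp add: z_def w_def mult.commute mult.left_commute)
  have fdr: "real_of_int z = real_of_int (2 * w + (if odd (nat z) then 1 else 0))"
    using fd by (rule arg_cong)
  have fdr2: "real_of_int z = 2 * real_of_int w + (if odd (nat z) then 1 else 0)"
    using fdr by simp
  have "(\<Sum>i<Suc n. (if odd (nat \<lfloor>y * 2^(Suc i)\<rfloor>) then 1 else 0) / (2::real)^(Suc i))
      = real_of_int w / 2^n + (if odd (nat z) then 1 else 0) / 2^(Suc n)"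
    unfolding sum.lessThan_Suc Suc.IH by (simp add: z_def w_def)
  also have "\<dots> = (2 * real_of_int w + (if odd (nat z) then 1 else 0)) / 2^(Suc n)"
    by (simp add: field_simps)
  also have "\<dots> = real_of_int z / 2^(Suc n)" using fdr2 by simp
  finally show ?case by (simp add: z_def)
qed

lemma inf_val_exists:
  assumes "0 \<le> y" "y \<le> 1"
  shows "\<exists>\<alpha>. inf_val \<alpha> = y"
proof (cases "y = 1")
  case True
  have "(\<lambda>n. (1/2::real)^Suc n) sums 1" by (rule power_half_series)
  then have "inf_val (\<lambda>_. True) = 1" unfolding inf_val_def
    by (simp add: sums_iff power_one_over)
  then show ?thesis using True by blast
next
  case False
  then have y1: "y < 1" using assms by simp
  define \<alpha> where "\<alpha> i = odd (nat \<lfloor>y * 2^(Suc i)\<rfloor>)" for i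
  have ps: "(\<Sum>i<n. (if \<alpha> i then 1 else 0) / 2^(Suc i)) = of_int \<lfloor>y * 2^n\<rfloor> / (2::real)^n" for n
    using partial_bin[OF assms(1) y1] by (simp add: \<alpha>_def)
  have lim: "(\<lambda>n. of_int \<lfloor>y * 2^n\<rfloor> / (2::real)^n) \<longlonglongrightarrow> y"
  proof (rule tendsto_sandwich[of "\<lambda>n. y - (1/2)^n" _ _ "\<lambda>n. y"])
    show "\<forall>\<^sub>F n in sequentially. y - (1/2)^n \<le> of_int \<lfloor>y * 2^n\<rfloor> / (2::real)^n"
    proof (intro always_eventually allI)
      fix n :: nat
      have "y * 2^n - 1 \<le> of_int \<lfloor>y * 2^n\<rfloor>" by linarith
      then have "(y * 2^n - 1) / 2^n \<le> of_int \<lfloor>y * 2^n\<rfloor> / (2::real)^n"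
        by (rule divide_right_mono) simp
      moreover have "(y * 2^n - 1) / 2^n = y - (1/2::real)^n"
        by (simp add: diff_divide_distrib power_one_over)
      ultimately show "y - (1/2)^n \<le> of_int \<lfloor>y * 2^n\<rfloor> / (2::real)^n" by simp
    qed
    show "\<forall>\<^sub>F n in sequentially. of_int \<lfloor>y * 2^n\<rfloor> / (2::real)^n \<le> y"
    proof (intro always_eventually allI)
      fix n :: nat
      have "of_int \<lfloor>y * 2^n\<rfloor> \<le> y * 2^n" by linarith
      then show "of_int \<lfloor>y * 2^n\<rfloor> / (2::real)^n \<le> y" by (simp add: field_simps)
    qed
    show "(\<lambda>n. y) \<longlonglongrightarrow> y" by simp
    have "(\<lambda>n. (1/2::real)^n) \<longlonglongrightarrow> 0" by (rule LIMSEQ_realpow_zero) auto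
    then show "(\<lambda>n. y - (1/2)^n) \<longlonglongrightarrow> y" using tendsto_diff[of "\<lambda>n. y" y sequentially] by force
  qed
  have "(\<lambda>i. (if \<alpha> i then 1 else 0) / (2::real)^(Suc i)) sums y"
    unfolding sums_def ps using lim .
  then have "inf_val \<alpha> = y" unfolding inf_val_def by (simp add: sums_iff)
  then show ?thesis by blast
qed

theorem lemma2p3:
  fixes H :: "(real \<Rightarrow> real) set"
  assumes "subgroup H thompsonF"
    and "\<And>u v. True \<in> set u \<Longrightarrow> False \<in> set u \<Longrightarrow> True \<in> set v \<Longrightarrow> False \<in> set v
           \<Longrightarrow> \<exists>h\<in>H. has_branches h u v"
  shows "derived thompsonF (carrier thompsonF) \<subseteq> thompson_closure H"
proof
  fix f assume "f \<in> derived thompsonF (carrier thompsonF)"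
  then have fS: "f \<in> Sset" using derived_S by blast
  then have fF: "f \<in> thompsonF_set" by (simp add: Sset_def)
  obtain e where e: "e > 0" "\<forall>x. (x \<le> e \<or> 1 - e \<le> x) \<longrightarrow> f x = x" using fS by (auto simp: Sset_def)
  obtain N K V where gr: "gridB N K V f" using to_grid[OF fF] by blast
  obtain n0 where n0: "(1/2::real)^n0 < e" using real_arch_pow_inv[OF e(1), of "1/2"] by auto
  define M where "M = N + K + V + n0"
  have "(1/2::real)^M \<le> (1/2)^n0" by (rule power_decreasing) (auto simp: M_def)
  then have Me: "1 / 2^M \<le> e" using n0 by (simp add: power_one_over)
  have idH: "id \<in> H" using subgroup.one_closed[OF assms(1)] by simp
  have mono: "strict_mono_on {0..1} f" and f0: "f 0 = 0" and f1: "f 1 = 1"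
    using F_mono[OF fF] by auto
  define xs where "xs = map (\<lambda>j. real j / 2^M) [0..<2^M+1]"
  have lxs: "length xs = 2^M + 1" by (simp add: xs_def)
  have nth: "\<And>i. i < 2^M + 1 \<Longrightarrow> xs!i = real i / 2^M" by (simp add: xs_def del: upt_Suc)
  have sub: "subdivision01 xs"
    unfolding subdivision01_def
  proof (intro conjI)
    show "2 \<le> length xs" using lxs by simp
    have "sorted_wrt (\<lambda>x y. real x / 2^M < real y / 2^M) [0..<2^M+1]"
      by (rule sorted_wrt_mono_rel[OF _ sorted_wrt_upt]) (simp add: divide_strict_right_mono)
    then show "sorted_wrt (<) xs" by (simp add: xs_def sorted_wrt_map del: upt_Suc)
    have ne: "xs \<noteq> []" using lxs by auto
    show "hd xs = 0" using nth[of 0] ne by (simp add: hd_conv_nth)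
    show "last xs = 1" using nth[of "2^M"] ne lxs by (simp add: last_conv_nth)
  qed
  have pcs: "\<forall>i < length xs - 1. \<exists>g\<in>H. \<forall>x\<in>{xs!i .. xs!(i+1)}. f x = g x"
  proof (intro allI impI)
    fix i assume "i < length xs - 1"
    then have i: "i < 2^M" using lxs by simp
    have ceq: "{xs!i .. xs!(i+1)} = cell M i" using nth[of i] nth[of "i+1"] i by (simp add: cell_def)
    have "\<exists>g\<in>H. \<forall>x\<in>cell M i. f x = g x"
    proof (cases "i = 0 \<or> i + 1 = 2^M")
      case True
      have "\<forall>x\<in>cell M i. f x = id x"
      proof
        fix x assume x: "x \<in> cell M i"
        show "f x = id x"
        proof (cases "i = 0")
          case True
          then have "x \<le> e" using x Me by (simp add: cell_def)
          then show ?thesis using e by simp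
        next
          case False
          then have ii: "i + 1 = 2^M" using \<open>i = 0 \<or> i + 1 = 2^M\<close> by simp
          then have "real i = 2^M - 1" by (metis add_diff_cancel_right' of_nat_1 of_nat_add of_nat_numeral of_nat_power)
          then have "real i / 2^M = 1 - 1 / 2^M" by (simp add: field_simps)
          then have "1 - e \<le> x" using x Me by (simp add: cell_def)
          then show ?thesis using e by simp
        qed
      qed
      then show ?thesis using idH by blast
    next
      case False
      then have i0: "0 < i" and i1: "i + 1 < 2^M" using i by auto
      obtain k q where kq: "\<bar>k\<bar> \<le> int K" "\<forall>x\<in>cell M i. f x = (of_int q + 2^M * x) / 2^(nat (int M - k))"
        using refine[OF gr _ i] by (auto simp: M_def)
      define L where "L = nat (int M - k)"
      have fx: "\<And>x. x \<in> cell M i \<Longrightarrow> f x = (of_int q + 2^M * x) / 2^L" using kq(2) by (simp add: L_def)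
      define p where "p = q + int i"
      have x0: "real i / 2^M \<in> cell M i" "real i / 2^M \<in> {0..1}" "0 < real i / 2^M"
        using i i0 by (auto simp: cell_def field_simps)
      have i1r: "real i + 1 < 2^M" using i1 by (metis of_nat_1 of_nat_add of_nat_less_iff of_nat_numeral of_nat_power)
      have x1: "(real i + 1) / 2^M \<in> cell M i" "(real i + 1) / 2^M \<in> {0..1}" "(real i + 1) / 2^M < 1"
        using i1r by (auto simp: cell_def field_simps)
      have g0: "f (real i / 2^M) = of_int p / 2^L" using fx[OF x0(1)] by (simp add: p_def)
      have g1: "f ((real i + 1) / 2^M) = (of_int p + 1) / 2^L" using fx[OF x1(1)] by (simp add: p_def)
      have "f 0 < f (real i / 2^M)" using mono x0 by (auto simp: monotone_on_def)
      then have "0 < of_int p / (2::real)^L" using g0 f0 by simp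
      then have p0: "0 < p" by (simp add: zero_less_divide_iff)
      have "f ((real i + 1) / 2^M) < f 1" using mono x1 by (auto simp: monotone_on_def)
      then have "(of_int p + 1) / (2::real)^L < 1" using g1 f1 by simp
      then have "of_int p + 1 < (2::real)^L" by (simp add: divide_less_eq)
      then have p1: "p + 1 < 2^L" by (metis of_int_1 of_int_add of_int_less_iff of_int_numeral of_int_power)
      define n where "n = nat p"
      have n0': "0 < n" using p0 by (simp add: n_def)
      have "int (n + 1) = p + 1" using p0 by (simp add: n_def)
      then have "int (n + 1) < int (2^L)" using p1 by simp
      then have n1: "n + 1 < 2^L" by (simp only: of_nat_less_iff)
      have nr: "real n = of_int p" using p0 by (simp add: n_def)
      define u where "u = bin M i"
      define v where "v = bin L n"
      have im: "i mod 2^M = i" using i by simp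
      have nm: "n mod 2^L = n" using n1 by simp
      have "True \<in> set u" "False \<in> set u" using i0 i1 im by (auto simp: u_def True_bin False_bin)
      moreover have "True \<in> set v" "False \<in> set v" using n0' n1 nm by (auto simp: v_def True_bin False_bin)
      ultimately obtain h where h: "h \<in> H" "has_branches h u v" using assms(2) by blast
      have "\<forall>x\<in>cell M i. f x = h x"
      proof
        fix x assume x: "x \<in> cell M i"
        define y where "y = 2^M * x - real i"
        have "real i / 2^M \<le> x" "x \<le> (real i + 1) / 2^M" using x by (auto simp: cell_def)
        then have y01: "0 \<le> y" "y \<le> 1" by (simp_all add: y_def field_simps)
        obtain \<alpha> where \<alpha>: "inf_val \<alpha> = y" using inf_val_exists[OF y01] by blast
        have wu: "word_val u = real i / 2^M" by (simp add: u_def word_val_bin im)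
        have wv: "word_val v = real n / 2^L" by (simp add: v_def word_val_bin nm)
        have xe: "x = word_val u + inf_val \<alpha> / 2^length u" unfolding wu \<alpha> by (simp add: u_def y_def field_simps)
        have "h x = word_val v + inf_val \<alpha> / 2^length v"
          using h(2) unfolding has_branches_def xe by blast
        also have "\<dots> = (real n + y) / 2^L" unfolding wv \<alpha> by (simp add: v_def add_divide_distrib)
        also have "\<dots> = f x" unfolding fx[OF x] nr p_def y_def by simp
        finally show "f x = h x" by simp
      qed
      then show ?thesis using h(1) by blast
    qed
    then show "\<exists>g\<in>H. \<forall>x\<in>{xs!i .. xs!(i+1)}. f x = g x" using ceq by simp
  qed
  show "f \<in> thompson_closure H"
    unfolding thompson_closure_def using fF sub pcs by blast
qed

end
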